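(* Let $\mathcal H_1=\mathcal H_2=\mathbb C^2$ and let $P_1,P_2$ be orthogonal projectors of rank two on $\mathcal H_2\otimes\mathcal H_1$ with $P_1+P_2=I_2\otimes I_1$. The two-outcome qubit $1$-tester $\{T_1=\frac12P_1,\ T_2=\frac12P_2\}$ is not extremal if and only if at least one of the following holds: (a) $P_1=I_2\otimes|v\rangle\langle v|$ for some unit vector $|v\rangle\in\mathcal H_1$; (b) there are unit vectors $|f\rangle\in\mathcal H_2$, $|e\rangle\in\mathcal H_1$ such that $|f\rangle\otimes|e\rangle\in\operatorname{Supp}(P_1)$ and $|f^\perp\rangle\otimes|e\rangle\in\operatorname{Supp}(P_2)$, where $|f^\perp\rangle$ is a unit vector orthogonal to $|f\rangle$ (equivalently, $P_1=|f\rangle\langle f|\otimes|e\rangle\langle e|+|h\rangle\langle h|\otimes|e^\perp\rangle\langle e^\perp|$ for some unit vectors $|f\rangle,|h\rangle\in\mathcal H_2$, $|e\rangle\in\mathcal H_1$).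
   Context: A quantum $1$-tester with $M$ outcomes is a family of positive operators $\{T_i\}_{i=1}^M$ on $\mathcal H_2\otimes\mathcal H_1$ with $\sum_iT_i=I_2\otimes\rho$ for a density operator $\rho$ on $\mathcal H_1$; extremal means an extreme point of the convex set of all such testers with $M$ outcomes. $\operatorname{Supp}$ denotes the range of a projector. *)

theory Defs
  imports "Jordan_Normal_Form.Schur_Decomposition" "Jordan_Normal_Form.DL_Rank"
begin

(* Hilbert spaces are C^d, vectors are complex vec of dimension d, operators complex mat.
   Tensor product H2 (x) H1: basis index (i2,i1) |-> i2 * d1 + i1 (Kronecker product). *)

definition kron :: "nat \<Rightarrow> nat \<Rightarrow> complex mat \<Rightarrow> complex mat \<Rightarrow> complex mat" where
  "kron d2 d1 A B = mat (d2 * d1) (d2 * d1)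
     (\<lambda>(i, j). A $$ (i div d1, j div d1) * B $$ (i mod d1, j mod d1))"

definition kron_vec :: "nat \<Rightarrow> nat \<Rightarrow> complex vec \<Rightarrow> complex vec \<Rightarrow> complex vec" where
  "kron_vec d2 d1 f e = vec (d2 * d1) (\<lambda>i. f $ (i div d1) * e $ (i mod d1))"

definition cinner :: "complex vec \<Rightarrow> complex vec \<Rightarrow> complex" where
  "cinner u v = (\<Sum>i<dim_vec v. cnj (u $ i) * v $ i)"

definition is_unit_vec :: "nat \<Rightarrow> complex vec \<Rightarrow> bool" where
  "is_unit_vec d v \<longleftrightarrow> v \<in> carrier_vec d \<and> cinner v v = 1"

definition ketbra :: "complex vec \<Rightarrow> complex mat" where
  "ketbra v = mat (dim_vec v) (dim_vec v) (\<lambda>(i, j). v $ i * cnj (v $ j))"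

definition positive_op :: "nat \<Rightarrow> complex mat \<Rightarrow> bool" where
  "positive_op d A \<longleftrightarrow> A \<in> carrier_mat d d \<and> mat_adjoint A = A \<and>
     (\<forall>v \<in> carrier_vec d. 0 \<le> Re (cinner v (A *\<^sub>v v)))"

definition mtrace :: "complex mat \<Rightarrow> complex" where
  "mtrace A = (\<Sum>i<dim_row A. A $$ (i, i))"

definition density_op :: "nat \<Rightarrow> complex mat \<Rightarrow> bool" where
  "density_op d \<rho> \<longleftrightarrow> positive_op d \<rho> \<and> mtrace \<rho> = 1"

definition orth_projector :: "nat \<Rightarrow> complex mat \<Rightarrow> bool" where
  "orth_projector d P \<longleftrightarrow> P \<in> carrier_mat d d \<and> P * P = P \<and> mat_adjoint P = P"

definition supp :: "complex mat \<Rightarrow> complex vec set" where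
  "supp P = {P *\<^sub>v w | w. w \<in> carrier_vec (dim_col P)}"

definition tester :: "nat \<Rightarrow> nat \<Rightarrow> nat \<Rightarrow> complex mat list \<Rightarrow> bool" where
  "tester d2 d1 M T \<longleftrightarrow> length T = M \<and> (\<forall>X \<in> set T. positive_op (d2 * d1) X) \<and>
     (\<exists>\<rho>. density_op d1 \<rho> \<and> foldr (+) T (0\<^sub>m (d2 * d1) (d2 * d1)) = kron d2 d1 (1\<^sub>m d2) \<rho>)"

definition conv_comb :: "real \<Rightarrow> complex mat list \<Rightarrow> complex mat list \<Rightarrow> complex mat list" where
  "conv_comb t X Y = map2 (\<lambda>A B. complex_of_real t \<cdot>\<^sub>m A + complex_of_real (1 - t) \<cdot>\<^sub>m B) X Y"

definition extremal_tester :: "nat \<Rightarrow> nat \<Rightarrow> nat \<Rightarrow> complex mat list \<Rightarrow> bool" where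
  "extremal_tester d2 d1 M T \<longleftrightarrow> tester d2 d1 M T \<and>
     \<not> (\<exists>X Y t. tester d2 d1 M X \<and> tester d2 d1 M Y \<and> X \<noteq> Y \<and> 0 < t \<and> t < 1 \<and>
                T = conv_comb t X Y)"

end

theory Submission
  imports Defs
begin


lemma sum4: "(\<Sum>i<(4::nat). f i) = f 0 + f 1 + f 2 + (f 3 :: 'a::comm_monoid_add)"
  by (simp add: numeral_eq_Suc lessThan_Suc add_ac)
lemma sum2: "(\<Sum>i<(2::nat). f i) = f 0 + (f 1 :: 'a::comm_monoid_add)"
  by (simp add: numeral_eq_Suc lessThan_Suc add_ac)
lemma sum4': "(\<Sum>i\<in>{0..<(4::nat)}. f i) = f 0 + f 1 + f 2 + (f 3 :: 'a::comm_monoid_add)"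
  using sum4 by (metis atLeast0LessThan)
lemma sum2': "(\<Sum>i\<in>{0..<(2::nat)}. f i) = f 0 + (f 1 :: 'a::comm_monoid_add)"
  using sum2 by (metis atLeast0LessThan)
lemma less4: "(i::nat) < 4 \<longleftrightarrow> i = 0 \<or> i = 1 \<or> i = 2 \<or> i = 3" by auto
lemma less2: "(i::nat) < 2 \<longleftrightarrow> i = 0 \<or> i = 1" by auto

lemma adj_carrier[simp]: "mat_adjoint A \<in> carrier_mat (dim_col A) (dim_row A)"
  unfolding mat_adjoint_def by auto
lemma adj_dims[simp]: "dim_row (mat_adjoint A) = dim_col A" "dim_col (mat_adjoint A) = dim_row A"
  unfolding mat_adjoint_def by auto
lemma adj_index[simp]: "i < dim_col A \<Longrightarrow> j < dim_row A \<Longrightarrow> mat_adjoint A $$ (i,j) = cnj (A $$ (j,i))"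
  unfolding mat_adjoint_def by (simp add: mat_of_rows_index)

lemma test: fixes A B :: "complex mat" assumes "A \<in> carrier_mat 4 4" "B \<in> carrier_mat 4 4"
  shows "(A*B) $$ (1,2) = A$$(1,0)*B$$(0,2) + A$$(1,1)*B$$(1,2) + A$$(1,2)*B$$(2,2) + A$$(1,3)*B$$(3,2)"
  using assms by (simp add: scalar_prod_def sum4' row_def col_def)


lemma adj_mult: fixes A B :: "complex mat"
  assumes "A \<in> carrier_mat n m" "B \<in> carrier_mat m k"
  shows "mat_adjoint (A*B) = mat_adjoint B * mat_adjoint A"
  apply (rule eq_matI)
  using assms by (auto simp: scalar_prod_def row_def col_def cnj_sum mult.commute intro!: sum.cong)

lemma adj_adj[simp]: fixes A :: "complex mat" shows "mat_adjoint (mat_adjoint A) = A"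
  by (rule eq_matI) auto

lemma adj_add: fixes A B :: "complex mat"
  assumes "A \<in> carrier_mat n m" "B \<in> carrier_mat n m"
  shows "mat_adjoint (A+B) = mat_adjoint A + mat_adjoint B"
  by (rule eq_matI) (use assms in auto)

lemma adj_minus: fixes A B :: "complex mat"
  assumes "A \<in> carrier_mat n m" "B \<in> carrier_mat n m"
  shows "mat_adjoint (A-B) = mat_adjoint A - mat_adjoint B"
  by (rule eq_matI) (use assms in auto)

lemma adj_smult: fixes A :: "complex mat"
  shows "mat_adjoint (c \<cdot>\<^sub>m A) = cnj c \<cdot>\<^sub>m mat_adjoint A"
  by (rule eq_matI) auto

lemma adj_one[simp]: "mat_adjoint (1\<^sub>m n :: complex mat) = 1\<^sub>m n"
  by (rule eq_matI) auto

lemma adj_zero[simp]: "mat_adjoint (0\<^sub>m n m :: complex mat) = 0\<^sub>m m n"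
  by (rule eq_matI) auto

lemma cinner_adj: fixes A :: "complex mat"
  assumes "A \<in> carrier_mat n m" "u \<in> carrier_vec n" "v \<in> carrier_vec m"
  shows "cinner u (A *\<^sub>v v) = cinner (mat_adjoint A *\<^sub>v u) v"
proof -
  have "cinner u (A *\<^sub>v v) = (\<Sum>i<n. \<Sum>j<m. cnj (u$i) * (A$$(i,j) * v$j))"
    using assms unfolding cinner_def
    by (auto simp: scalar_prod_def row_def sum_distrib_left atLeast0LessThan)
  also have "\<dots> = (\<Sum>j<m. \<Sum>i<n. cnj (u$i) * (A$$(i,j) * v$j))" by (rule sum.swap)
  also have "\<dots> = cinner (mat_adjoint A *\<^sub>v u) v"
    using assms unfolding cinner_def
    by (auto simp: scalar_prod_def row_def sum_distrib_right sum_distrib_left atLeast0LessThan cnj_sum mult_ac intro!: sum.cong)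
  finally show ?thesis .
qed

lemma Re_cnj_self: "Re (cnj z * z) = (cmod z)^2"
  by (metis Re_complex_of_real complex_norm_square mult.commute)

lemma cinner_self_Re: "Re (cinner v v) = (\<Sum>i<dim_vec v. (cmod (v$i))^2)"
  unfolding cinner_def Re_sum by (simp only: Re_cnj_self)

lemma cinner_self_ge0: "0 \<le> Re (cinner v v)"
  unfolding cinner_self_Re by (auto intro!: sum_nonneg)

lemma cinner_self_0: assumes "v \<in> carrier_vec n" "Re (cinner v v) = 0" shows "v = 0\<^sub>v n"
proof -
  have "(\<Sum>i<n. (cmod (v$i))^2) = 0" using assms cinner_self_Re[of v] by simp
  hence "\<And>i. i < n \<Longrightarrow> (cmod (v$i))^2 = 0"
    using sum_nonneg_eq_0_iff[of "{..<n}" "\<lambda>i. (cmod (v$i))^2"] by auto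
  hence "\<And>i. i < n \<Longrightarrow> v$i = 0" by simp
  thus ?thesis using assms by (intro eq_vecI) auto
qed


lemma cinner_add_right: "v \<in> carrier_vec n \<Longrightarrow> w \<in> carrier_vec n \<Longrightarrow> cinner u (v + w) = cinner u v + cinner u w"
  unfolding cinner_def by (simp add: distrib_left sum.distrib)
lemma cinner_add_left: "u \<in> carrier_vec n \<Longrightarrow> v \<in> carrier_vec n \<Longrightarrow> w \<in> carrier_vec n \<Longrightarrow> cinner (u + v) w = cinner u w + cinner v w"
  unfolding cinner_def by (simp add: distrib_right sum.distrib)
lemma cinner_smult_right: "cinner u (c \<cdot>\<^sub>v v) = c * cinner u v"
  unfolding cinner_def by (simp add: sum_distrib_left mult_ac)
lemma cinner_smult_left: "u \<in> carrier_vec n \<Longrightarrow> v \<in> carrier_vec n \<Longrightarrow> cinner (c \<cdot>\<^sub>v u) v = cnj c * cinner u v"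
  unfolding cinner_def by (simp add: sum_distrib_left mult_ac)

lemma psd_kernel:
  fixes A :: "complex mat"
  assumes A: "A \<in> carrier_mat n n" and h: "mat_adjoint A = A"
    and pos: "\<forall>u \<in> carrier_vec n. 0 \<le> Re (cinner u (A *\<^sub>v u))"
    and v: "v \<in> carrier_vec n" and z: "Re (cinner v (A *\<^sub>v v)) = 0"
  shows "A *\<^sub>v v = 0\<^sub>v n"
proof -
  define w where "w = A *\<^sub>v v"
  have w: "w \<in> carrier_vec n" using A v w_def by auto
  define a where "a = Re (cinner w w)"
  define c where "c = Re (cinner w (A *\<^sub>v w))"
  have a0: "0 \<le> a" unfolding a_def by (rule cinner_self_ge0)
  have c0: "0 \<le> c" unfolding c_def using pos w by auto
  have key: "0 \<le> 2 * s * a + s^2 * c" for s :: real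
  proof -
    define u where "u = v + complex_of_real s \<cdot>\<^sub>v w"
    have u: "u \<in> carrier_vec n" using v w u_def by auto
    have Au: "A *\<^sub>v u = w + complex_of_real s \<cdot>\<^sub>v (A *\<^sub>v w)"
      unfolding u_def w_def using A v w w_def
      by (simp add: mult_add_distrib_mat_vec mult_mat_vec)
    have e1: "cinner v (A *\<^sub>v w) = cinner w w"
      using cinner_adj[OF A v w] h w_def by simp
    have "cinner u (A *\<^sub>v u) = cinner u (w + complex_of_real s \<cdot>\<^sub>v (A *\<^sub>v w))" using Au by simp
    also have "\<dots> = cinner v w + complex_of_real s * cinner v (A *\<^sub>v w)
        + cnj (complex_of_real s) * cinner w w + cnj (complex_of_real s) * (complex_of_real s * cinner w (A *\<^sub>v w))"
      unfolding u_def using v w A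
      by (simp add: cinner_add_left[of _ n] cinner_add_right[of _ n] cinner_smult_left[of _ n] cinner_smult_right distrib_left)
    finally have "Re (cinner u (A *\<^sub>v u)) = 2 * s * a + s^2 * c"
      using z e1 w_def unfolding a_def c_def w_def by (simp add: power2_eq_square algebra_simps)
    thus ?thesis using pos u by auto
  qed
  have "a = 0"
  proof (rule ccontr)
    assume "a \<noteq> 0" hence ap: "a > 0" using a0 by auto
    define x where "x = a / (c+1)"
    have xp: "x > 0" unfolding x_def using ap c0 by auto
    have "x * c < a" unfolding x_def using ap c0 by (simp add: divide_less_eq algebra_simps)
    hence "x * (x*c - 2*a) < 0" using xp ap by (intro mult_pos_neg) auto
    moreover have "0 \<le> 2 * (-x) * a + (-x)^2 * c" by (rule key)
    moreover have "2 * (-x) * a + (-x)^2 * c = x * (x*c - 2*a)" by (simp add: algebra_simps power2_eq_square)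
    ultimately show False by simp
  qed
  thus ?thesis using cinner_self_0[OF w] a_def w_def by simp
qed

lemma herm_idem_pos:
  fixes A :: "complex mat"
  assumes A: "A \<in> carrier_mat n n" and h: "mat_adjoint A = A" and i: "A * A = A"
  shows "positive_op n A"
  unfolding positive_op_def
proof (intro conjI ballI A h)
  fix v :: "complex vec" assume v: "v \<in> carrier_vec n"
  have "A *\<^sub>v v = A *\<^sub>v (A *\<^sub>v v)" using i A v by (metis assoc_mult_mat_vec)
  hence "cinner v (A *\<^sub>v v) = cinner (A *\<^sub>v v) (A *\<^sub>v v)"
    using cinner_adj[OF A v, of "A *\<^sub>v v"] h A v by auto
  thus "0 \<le> Re (cinner v (A *\<^sub>v v))" using cinner_self_ge0 by simp
qed


definition Vm :: "complex vec \<Rightarrow> complex mat" where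
  "Vm e = mat 4 2 (\<lambda>(i,j). if i div 2 = j then e$(i mod 2) else 0)"

definition perp :: "complex vec \<Rightarrow> complex vec" where
  "perp e = vec 2 (\<lambda>i. if i = 0 then - cnj (e$1) else cnj (e$0))"

lemma Vm_carrier[simp]: "Vm e \<in> carrier_mat 4 2" unfolding Vm_def by auto
lemma Vm_dims[simp]: "dim_row (Vm e) = 4" "dim_col (Vm e) = 2" unfolding Vm_def by auto
lemma perp_carrier[simp]: "perp e \<in> carrier_vec 2" "dim_vec (perp e) = 2" unfolding perp_def by auto

lemma unit_expand: "is_unit_vec 2 e \<longleftrightarrow> dim_vec e = 2 \<and> cnj (e$0) * e$0 + cnj (e$1) * e$1 = 1"
  unfolding is_unit_vec_def cinner_def carrier_vec_def by (auto simp: sum2)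

lemma cinner2: "dim_vec v = 2 \<Longrightarrow> cinner u v = cnj (u$0) * v$0 + cnj (u$1) * v$1"
  unfolding cinner_def by (simp add: sum2)

lemma kron_one_one: "kron 2 2 (1\<^sub>m 2) (1\<^sub>m 2) = 1\<^sub>m 4"
  unfolding kron_def by (rule eq_matI) (auto simp: less4)

lemma kron_carrier[simp]: "kron d2 d1 A B \<in> carrier_mat (d2*d1) (d2*d1)" unfolding kron_def by auto

lemma ketbra_carrier[simp]: "dim_vec e = n \<Longrightarrow> ketbra e \<in> carrier_mat n n" unfolding ketbra_def by auto

lemma K_V: "dim_vec e = 2 \<Longrightarrow> kron 2 2 (1\<^sub>m 2) (ketbra e) = Vm e * mat_adjoint (Vm e)"
  unfolding kron_def ketbra_def Vm_def
  by (rule eq_matI) (auto simp: less4 scalar_prod_def sum2' row_def col_def)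

lemma VhV: "is_unit_vec 2 e \<Longrightarrow> mat_adjoint (Vm e) * Vm e = 1\<^sub>m 2"
  unfolding unit_expand Vm_def
  by (rule eq_matI) (auto simp: less2 scalar_prod_def sum4' row_def col_def mult.commute)

lemma VhW: "dim_vec e = 2 \<Longrightarrow> dim_vec f = 2 \<Longrightarrow> cinner e f = 0 \<Longrightarrow> mat_adjoint (Vm e) * Vm f = 0\<^sub>m 2 2"
  unfolding cinner2 Vm_def
  by (rule eq_matI) (auto simp: less2 scalar_prod_def sum4' row_def col_def cinner2)

lemma Vvec: "f \<in> carrier_vec 2 \<Longrightarrow> Vm e *\<^sub>v f = kron_vec 2 2 f e"
  unfolding Vm_def kron_vec_def
  by (rule eq_vecI) (auto simp: less4 scalar_prod_def sum2' row_def)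

lemma perp_unit: "is_unit_vec 2 e \<Longrightarrow> is_unit_vec 2 (perp e)"
  unfolding unit_expand perp_def by (auto simp: mult.commute add.commute)

lemma perp_orth: "cinner e (perp e) = 0"
  unfolding perp_def cinner_def by (simp add: sum2)

lemma perp_compl: "is_unit_vec 2 e \<Longrightarrow> ketbra e + ketbra (perp e) = 1\<^sub>m 2"
  unfolding unit_expand perp_def ketbra_def
  by (rule eq_matI) (auto simp: less2 mult.commute add.commute)

lemma ketbra_adj: "mat_adjoint (ketbra e) = ketbra e"
  unfolding ketbra_def by (rule eq_matI) auto

lemma ketbra_vec: "dim_vec f = 2 \<Longrightarrow> g \<in> carrier_vec 2 \<Longrightarrow> ketbra f *\<^sub>v g = cinner f g \<cdot>\<^sub>v f"
  unfolding ketbra_def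
  by (rule eq_vecI) (auto simp: less2 scalar_prod_def sum2' row_def cinner2 algebra_simps)

lemma kron_add: "A \<in> carrier_mat 2 2 \<Longrightarrow> B \<in> carrier_mat 2 2 \<Longrightarrow>
   kron 2 2 (1\<^sub>m 2) (A + B) = kron 2 2 (1\<^sub>m 2) A + kron 2 2 (1\<^sub>m 2) B"
  unfolding kron_def by (rule eq_matI) (auto simp: less4)

lemma kron_minus: "A \<in> carrier_mat 2 2 \<Longrightarrow> B \<in> carrier_mat 2 2 \<Longrightarrow>
   kron 2 2 (1\<^sub>m 2) (A - B) = kron 2 2 (1\<^sub>m 2) A - kron 2 2 (1\<^sub>m 2) B"
  unfolding kron_def by (rule eq_matI) (auto simp: less4)

lemma kron_smult: "A \<in> carrier_mat 2 2 \<Longrightarrow>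
   kron 2 2 (1\<^sub>m 2) (c \<cdot>\<^sub>m A) = c \<cdot>\<^sub>m kron 2 2 (1\<^sub>m 2) A"
  unfolding kron_def by (rule eq_matI) (auto simp: less4)

lemma compl_general:
  assumes f: "is_unit_vec 2 f" and p: "is_unit_vec 2 fp" and o: "cinner f fp = 0"
  shows "ketbra f + ketbra fp = 1\<^sub>m 2"
proof -
  define U where "U = mat 2 2 (\<lambda>(i,j). if j = 0 then f$i else fp$i)"
  have U: "U \<in> carrier_mat 2 2" unfolding U_def by auto
  have o2: "cinner fp f = 0" using o unfolding cinner_def
    by (metis (no_types, lifting) complex_cnj_cnj complex_cnj_mult complex_cnj_zero f p cnj_sum is_unit_vec_def carrier_vecD mult.commute sum.cong)
  have "mat_adjoint U * U = 1\<^sub>m 2"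
    using f p o o2 unfolding U_def unit_expand cinner2
    by (intro eq_matI) (auto simp: less2 scalar_prod_def sum2' row_def col_def cinner2)
  hence "U * mat_adjoint U = 1\<^sub>m 2"
    using mat_mult_left_right_inverse[of "mat_adjoint U" 2 U] U adj_carrier[of U] by auto
  moreover have "ketbra f + ketbra fp = U * mat_adjoint U"
    using f p unfolding U_def unit_expand ketbra_def
    by (intro eq_matI) (auto simp: less2 scalar_prod_def sum2' row_def col_def)
  ultimately show ?thesis by simp
qed


lemma real_of_cnj_eq: "cnj z = z \<Longrightarrow> z = complex_of_real (Re z)"
  by (simp add: complex_eq_iff)

lemma b_cnj: "b * cnj b = complex_of_real ((cmod b)^2)"
  by (rule complex_norm_square[symmetric])

lemma proj2_class:
  fixes Q :: "complex mat"
  assumes Q: "Q \<in> carrier_mat 2 2" and h: "mat_adjoint Q = Q" and i: "Q * Q = Q"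
  shows "Q = 0\<^sub>m 2 2 \<or> Q = 1\<^sub>m 2 \<or> (\<exists>f. is_unit_vec 2 f \<and> Q = ketbra f)"
proof -
  have hh: "\<And>i j. i < 2 \<Longrightarrow> j < 2 \<Longrightarrow> Q $$ (i,j) = cnj (Q $$ (j,i))"
    using h Q by (metis adj_index carrier_matD(1) carrier_matD(2))
  have ii: "\<And>i j. i < 2 \<Longrightarrow> j < 2 \<Longrightarrow> Q $$ (i,0) * Q $$ (0,j) + Q $$ (i,1) * Q $$ (1,j) = Q $$ (i,j)"
  proof -
    fix i j :: nat assume "i < 2" "j < 2"
    hence "(Q*Q) $$ (i,j) = Q $$ (i,j)" using i by simp
    thus "Q $$ (i,0) * Q $$ (0,j) + Q $$ (i,1) * Q $$ (1,j) = Q $$ (i,j)"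
      using Q \<open>i<2\<close> \<open>j<2\<close> by (simp add: scalar_prod_def sum2' row_def col_def)
  qed
  define a where "a = Re (Q $$ (0,0))"
  define d where "d = Re (Q $$ (1,1))"
  define b where "b = Q $$ (0,1)"
  have qa: "Q $$ (0,0) = complex_of_real a" unfolding a_def by (rule real_of_cnj_eq) (use hh[of 0 0] in simp)
  have qd: "Q $$ (1,1) = complex_of_real d" unfolding d_def by (rule real_of_cnj_eq) (use hh[of 1 1] in simp)
  have qc: "Q $$ (1,0) = cnj b" unfolding b_def using hh[of 1 0] by simp
  have e1: "a * a + (cmod b)^2 = a"
  proof -
    have "complex_of_real a * complex_of_real a + b * cnj b = complex_of_real a"
      using ii[of 0 0] qa qc b_def by simp
    hence "complex_of_real (a * a + (cmod b)^2) = complex_of_real a" by (simp only: of_real_add of_real_mult b_cnj[of b, symmetric])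
    thus ?thesis using of_real_eq_iff by blast
  qed
  have e3: "d * d + (cmod b)^2 = d"
  proof -
    have "cnj b * b + complex_of_real d * complex_of_real d = complex_of_real d"
      using ii[of 1 1] qd qc b_def by simp
    hence "complex_of_real (d * d + (cmod b)^2) = complex_of_real d" by (simp only: of_real_add of_real_mult b_cnj[of b, symmetric]) (simp add: mult.commute add.commute)
    thus ?thesis using of_real_eq_iff by blast
  qed
  have e2: "complex_of_real a * b + b * complex_of_real d = b"
    using ii[of 0 1] qa qd b_def by simp
  have Qeq: "Q = mat 2 2 (\<lambda>(i,j). if i = 0 then (if j = 0 then complex_of_real a else b)
                                  else (if j = 0 then cnj b else complex_of_real d))"
    using Q qa qd qc b_def by (intro eq_matI) (auto simp: less2)
  show ?thesis
  proof (cases "b = 0")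
    case True
    hence "a = 0 \<or> a = 1" "d = 0 \<or> d = 1" using e1 e3 by (auto simp: algebra_simps) 
    hence a01: "a = 0 \<or> a = 1" and d01: "d = 0 \<or> d = 1" by auto
    show ?thesis
    proof (cases "a = 0")
      case a0: True
      show ?thesis
      proof (cases "d = 0")
        case True
        hence "Q = 0\<^sub>m 2 2" unfolding Qeq using a0 \<open>b = 0\<close> by (intro eq_matI) (auto simp: less2)
        thus ?thesis by simp
      next
        case False
        hence d1: "d = 1" using d01 by simp
        define f :: "complex vec" where "f = vec 2 (\<lambda>i. if i = 0 then 0 else 1)"
        have "is_unit_vec 2 f" unfolding unit_expand f_def by simp
        moreover have "Q = ketbra f" unfolding Qeq f_def ketbra_def using a0 d1 \<open>b = 0\<close>
          by (intro eq_matI) (auto simp: less2)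
        ultimately show ?thesis by blast
      qed
    next
      case False
      hence a1: "a = 1" using a01 by simp
      show ?thesis
      proof (cases "d = 0")
        case True
        define f :: "complex vec" where "f = vec 2 (\<lambda>i. if i = 0 then 1 else 0)"
        have "is_unit_vec 2 f" unfolding unit_expand f_def by simp
        moreover have "Q = ketbra f" unfolding Qeq f_def ketbra_def using a1 True \<open>b = 0\<close>
          by (intro eq_matI) (auto simp: less2)
        ultimately show ?thesis by blast
      next
        case False
        hence d1: "d = 1" using d01 by simp
        hence "Q = 1\<^sub>m 2" unfolding Qeq using a1 \<open>b = 0\<close> by (intro eq_matI) (auto simp: less2)
        thus ?thesis by simp
      qed
    qed
  next
    case False
    have ad: "a + d = 1"
    proof -
      have "b * (complex_of_real (a + d) - 1) = 0" using e2 by (simp add: algebra_simps)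
      hence "complex_of_real (a + d) = 1" using False by simp
      thus ?thesis by (metis of_real_eq_1_iff)
    qed
    have bpos: "(cmod b)^2 > 0" using False by simp
    have "a * a \<ge> 0" by simp
    hence apos: "a > 0" using e1 bpos by linarith
    define s where "s = sqrt a"
    have spos: "s > 0" unfolding s_def using apos by simp
    have ss: "s * s = a" unfolding s_def using apos by simp
    define f :: "complex vec" where "f = vec 2 (\<lambda>i. if i = 0 then complex_of_real s else cnj b / complex_of_real s)"
    have nb: "(cmod b)^2 = a - a * a" using e1 by simp
    have "cnj b * b / (complex_of_real s * complex_of_real s) = complex_of_real (1 - a)"
    proof -
      have "cnj b * b = complex_of_real ((cmod b)^2)" using b_cnj[of b] by (simp add: mult.commute)
      also have "\<dots> = complex_of_real (a - a * a)" using nb by simp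
      finally have "cnj b * b / (complex_of_real s * complex_of_real s) = complex_of_real ((a - a*a) / a)"
        using ss by (simp flip: of_real_mult)
      also have "(a - a*a)/a = 1 - a" using apos by (simp add: field_simps)
      finally show ?thesis .
    qed
    hence k11: "cnj b * b / (complex_of_real s * complex_of_real s) = complex_of_real d" using ad
      by (metis add_diff_cancel_left')
    have sn: "complex_of_real s \<noteq> 0" using spos by simp
    have "is_unit_vec 2 f" unfolding unit_expand f_def using k11 sn ss ad
      by (simp add: field_simps flip: of_real_mult) (metis of_real_add of_real_1 mult.commute)
    moreover have "Q = ketbra f" unfolding Qeq f_def ketbra_def using k11 sn ss
      by (intro eq_matI) (auto simp: less2 field_simps simp flip: of_real_mult)
    ultimately show ?thesis by blast
  qed
qed


lemma proj_from_xy: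
  fixes x :: real and y :: complex
  assumes xy: "x^2 + (cmod y)^2 = 1/4"
  shows "\<exists>f. is_unit_vec 2 f \<and> ketbra f = mat 2 2 (\<lambda>(i,j). if i = 0 then (if j = 0 then 1/2 + complex_of_real x else y)
                                  else (if j = 0 then cnj y else 1/2 - complex_of_real x))"
proof -
  define E :: "complex mat" where "E = mat 2 2 (\<lambda>(i,j). if i = 0 then (if j = 0 then 1/2 + complex_of_real x else y)
                                  else (if j = 0 then cnj y else 1/2 - complex_of_real x))"
  have E: "E \<in> carrier_mat 2 2" unfolding E_def by auto
  have h: "mat_adjoint E = E" unfolding E_def by (intro eq_matI) (auto simp: less2)
  have c: "(cmod y)^2 = 1/4 - x^2" using xy by simp
  have yy: "y * cnj y = complex_of_real (1/4 - x^2)" by (simp only: b_cnj c)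
  have yy': "cnj y * y = complex_of_real (1/4 - x^2)" using yy by (simp add: mult.commute)
  have "E * E = E" unfolding E_def
    apply (intro eq_matI)
    apply (auto simp: less2 scalar_prod_def sum2' row_def col_def yy yy' algebra_simps power2_eq_square)
    apply (simp_all add: field_simps)
    done
  from proj2_class[OF E h this] obtain f where "is_unit_vec 2 f" "E = ketbra f"
  proof -
    have t: "E $$ (0,0) + E $$ (1,1) = 1" unfolding E_def by simp
    have "E \<noteq> 0\<^sub>m 2 2" using t by auto
    moreover have "E \<noteq> 1\<^sub>m 2" using t by auto
    ultimately show ?thesis using proj2_class[OF E h \<open>E * E = E\<close>] that by blast
  qed
  thus ?thesis unfolding E_def by metis
qed

lemma traceless_to_ketbra:
  fixes \<sigma> :: "complex mat"
  assumes S: "\<sigma> \<in> carrier_mat 2 2" and h: "mat_adjoint \<sigma> = \<sigma>" and tr: "\<sigma> $$ (0,0) + \<sigma> $$ (1,1) = 0"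
    and nz: "\<sigma> \<noteq> 0\<^sub>m 2 2"
  shows "\<exists>e c1 c2. is_unit_vec 2 e \<and> ketbra e = c1 \<cdot>\<^sub>m \<sigma> + c2 \<cdot>\<^sub>m 1\<^sub>m 2"
proof -
  have hh: "\<And>i j. i < 2 \<Longrightarrow> j < 2 \<Longrightarrow> \<sigma> $$ (i,j) = cnj (\<sigma> $$ (j,i))"
    using h S by (metis adj_index carrier_matD(1) carrier_matD(2))
  define a where "a = Re (\<sigma> $$ (0,0))"
  define b where "b = \<sigma> $$ (0,1)"
  have qa: "\<sigma> $$ (0,0) = complex_of_real a" unfolding a_def by (rule real_of_cnj_eq) (use hh[of 0 0] in simp)
  have qd: "\<sigma> $$ (1,1) = - complex_of_real a" using qa tr by (simp add: eq_neg_iff_add_eq_0 add.commute)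
  have qc: "\<sigma> $$ (1,0) = cnj b" unfolding b_def using hh[of 1 0] by simp
  have Seq: "\<sigma> = mat 2 2 (\<lambda>(i,j). if i = 0 then (if j = 0 then complex_of_real a else b)
                                  else (if j = 0 then cnj b else - complex_of_real a))"
    using S qa qd qc b_def by (intro eq_matI) (auto simp: less2)
  have "a \<noteq> 0 \<or> b \<noteq> 0"
  proof (rule ccontr)
    assume "\<not> (a \<noteq> 0 \<or> b \<noteq> 0)"
    hence "\<sigma> = 0\<^sub>m 2 2" unfolding Seq by (intro eq_matI) (auto simp: less2)
    thus False using nz by simp
  qed
  hence pos: "a^2 + (cmod b)^2 > 0" by (auto simp: add_pos_nonneg add_nonneg_pos)
  define L where "L = sqrt (a^2 + (cmod b)^2)"
  have Lpos: "L > 0" unfolding L_def using pos by simp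
  have LL: "L^2 = a^2 + (cmod b)^2" unfolding L_def using pos by simp
  define x where "x = a / (2*L)"
  define y where "y = b / complex_of_real (2*L)"
  have D: "4*a^2 + 4*(cmod b)^2 \<noteq> 0" using pos by simp
  have "x^2 + (cmod y)^2 = (a^2 + (cmod b)^2) / (4 * L^2)" unfolding x_def y_def using Lpos
    by (simp add: power_divide norm_divide power_mult_distrib add_divide_distrib)
  also have "\<dots> = 1/4" using LL Lpos pos by simp
  finally have "x^2 + (cmod y)^2 = 1/4" .
  from proj_from_xy[OF this] obtain f where f: "is_unit_vec 2 f"
    and fE: "ketbra f = mat 2 2 (\<lambda>(i,j). if i = 0 then (if j = 0 then 1/2 + complex_of_real x else y)
                                  else (if j = 0 then cnj y else 1/2 - complex_of_real x))" by blast
  have "ketbra f = complex_of_real (1/(2*L)) \<cdot>\<^sub>m \<sigma> + (1/2) \<cdot>\<^sub>m 1\<^sub>m 2"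
    unfolding fE Seq x_def y_def using Lpos
    by (intro eq_matI) (auto simp: less2 field_simps)
  thus ?thesis using f by blast
qed


lemma adj_carrier_iff[simp]: "mat_adjoint A \<in> carrier_mat n m \<longleftrightarrow> A \<in> carrier_mat m n"
  unfolding carrier_mat_def by auto

lemma massoc: "dim_col A = dim_row B \<Longrightarrow> dim_col B = dim_row C \<Longrightarrow> A * B * C = A * (B * (C :: complex mat))"
  by (rule assoc_mult_mat[of A "dim_row A" "dim_col A" B "dim_col B" C "dim_col C"]) auto

lemma comm_add: fixes A B C :: "complex mat"
  assumes "A \<in> carrier_mat n n" "B \<in> carrier_mat n n" "C \<in> carrier_mat n n" "A*B = B*A" "A*C = C*A"
  shows "A*(B+C) = (B+C)*A"
  using assms by (simp add: mult_add_distrib_mat[of _ n n] add_mult_distrib_mat[of _ n n])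

lemma comm_minus: fixes A B C :: "complex mat"
  assumes "A \<in> carrier_mat n n" "B \<in> carrier_mat n n" "C \<in> carrier_mat n n" "A*B = B*A" "A*C = C*A"
  shows "A*(B-C) = (B-C)*A"
  using assms by (simp add: mult_minus_distrib_mat[of _ n n] minus_mult_distrib_mat[of _ n n])

lemma comm_smult: fixes A B :: "complex mat"
  assumes "A \<in> carrier_mat n n" "B \<in> carrier_mat n n" "A*B = B*A"
  shows "A*(c \<cdot>\<^sub>m B) = (c \<cdot>\<^sub>m B)*A"
  using assms by (simp add: mult_smult_distrib[of _ n n] mult_smult_assoc_mat[of _ n n])

lemma comm_one: fixes A :: "complex mat"
  assumes "A \<in> carrier_mat n n" shows "A * 1\<^sub>m n = 1\<^sub>m n * A"
  using assms by simp

lemma comm_sym: "A*B = B*A \<Longrightarrow> B*A = A*(B::complex mat)" by simp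

lemma herm_idem_prod:
  fixes A B :: "complex mat"
  assumes A: "A \<in> carrier_mat n n" and B: "B \<in> carrier_mat n n"
    and hA: "mat_adjoint A = A" and hB: "mat_adjoint B = B" and iA: "A*A = A" and iB: "B*B = B"
    and c: "A*B = B*A"
  shows "mat_adjoint (A*B) = A*B" "(A*B)*(A*B) = A*B"
proof -
  show "mat_adjoint (A*B) = A*B" using adj_mult[OF A B] hA hB c by simp
  have "(A*B)*(A*B) = A*(B*A)*B" using A B by (simp add: massoc)
  also have "\<dots> = A*(A*B)*B" using c by simp
  also have "\<dots> = (A*A)*(B*B)" using A B by (simp add: massoc)
  finally show "(A*B)*(A*B) = A*B" using iA iB by simp
qed

lemma add_eq_minus: fixes A B C :: "complex mat"
  assumes "A \<in> carrier_mat n m" "B \<in> carrier_mat n m" "A + B = C"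
  shows "B = C - A"
proof (rule eq_matI)
  fix i j assume ij: "i < dim_row (C - A)" "j < dim_col (C - A)"
  have "C $$ (i,j) = A $$ (i,j) + B $$ (i,j)" using assms ij by auto
  thus "B $$ (i,j) = (C - A) $$ (i,j)" using assms ij by auto
qed (use assms in auto)

definition Kop :: "complex vec \<Rightarrow> complex mat" where
  "Kop e = kron 2 2 (1\<^sub>m 2) (ketbra e)"

lemma Kop_carrier[simp]: "Kop e \<in> carrier_mat 4 4"
  unfolding Kop_def using kron_carrier[of 2 2] by simp

lemma Kop_V: "is_unit_vec 2 e \<Longrightarrow> Kop e = Vm e * mat_adjoint (Vm e)"
  unfolding Kop_def by (rule K_V) (simp add: unit_expand)

lemma Kop_herm: "is_unit_vec 2 e \<Longrightarrow> mat_adjoint (Kop e) = Kop e"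
  using Kop_V[of e] adj_mult[of "Vm e" 4 2 "mat_adjoint (Vm e)" 4] by simp

lemma Kop_idem: "is_unit_vec 2 e \<Longrightarrow> Kop e * Kop e = Kop e"
proof -
  assume u: "is_unit_vec 2 e"
  have "Kop e * Kop e = Vm e * (mat_adjoint (Vm e) * Vm e) * mat_adjoint (Vm e)"
    unfolding Kop_V[OF u] by (simp add: massoc)
  thus ?thesis using VhV[OF u] Kop_V[OF u] by simp
qed

lemma Kop_compl: "is_unit_vec 2 e \<Longrightarrow> Kop (perp e) = 1\<^sub>m 4 - Kop e"
proof -
  assume u: "is_unit_vec 2 e"
  have "Kop e + Kop (perp e) = 1\<^sub>m 4"
    unfolding Kop_def using kron_add[of "ketbra e" "ketbra (perp e)"] perp_compl[OF u] kron_one_one u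
    by (simp add: unit_expand)
  thus ?thesis using Kop_carrier[of e] Kop_carrier[of "perp e"]
    by (intro add_eq_minus[of _ 4 4]) auto
qed


lemma mdist_minus_r: "dim_col A = dim_row B \<Longrightarrow> dim_row B = dim_row C \<Longrightarrow> dim_col B = dim_col C \<Longrightarrow> A*(B-C) = A*B - A*(C::complex mat)"
  by (rule mult_minus_distrib_mat[of A "dim_row A" "dim_col A" B "dim_col B"]) auto
lemma mdist_minus_l: "dim_col A = dim_row C \<Longrightarrow> dim_row A = dim_row B \<Longrightarrow> dim_col A = dim_col B \<Longrightarrow> (A-B)*C = A*C - B*(C::complex mat)"
  by (rule minus_mult_distrib_mat[of A "dim_row A" "dim_col A" B C "dim_col C"]) auto
lemma mdist_add_r: "dim_col A = dim_row B \<Longrightarrow> dim_row B = dim_row C \<Longrightarrow> dim_col B = dim_col C \<Longrightarrow> A*(B+C) = A*B + A*(C::complex mat)"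
  by (rule mult_add_distrib_mat[of A "dim_row A" "dim_col A" B "dim_col B"]) auto
lemma mdist_add_l: "dim_col A = dim_row C \<Longrightarrow> dim_row A = dim_row B \<Longrightarrow> dim_col A = dim_col B \<Longrightarrow> (A+B)*C = A*C + B*(C::complex mat)"
  by (rule add_mult_distrib_mat[of A "dim_row A" "dim_col A" B C "dim_col C"]) auto
lemma Kop_dims[simp]: "dim_row (Kop e) = 4" "dim_col (Kop e) = 4" using carrier_matD[OF Kop_carrier] by auto

locale setting =
  fixes P1 P2 :: "complex mat"
  assumes o1: "orth_projector 4 P1" and o2: "orth_projector 4 P2" and sum: "P1 + P2 = 1\<^sub>m 4"
begin

lemma P1c[simp]: "P1 \<in> carrier_mat 4 4" using o1 unfolding orth_projector_def by auto
lemma P2c[simp]: "P2 \<in> carrier_mat 4 4" using o2 unfolding orth_projector_def by auto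
lemma P1d[simp]: "dim_row P1 = 4" "dim_col P1 = 4" using carrier_matD[OF P1c] by auto
lemma P2d[simp]: "dim_row P2 = 4" "dim_col P2 = 4" using carrier_matD[OF P2c] by auto
lemma P1i[simp]: "P1 * P1 = P1" using o1 unfolding orth_projector_def by auto
lemma P2i[simp]: "P2 * P2 = P2" using o2 unfolding orth_projector_def by auto
lemma P1h[simp]: "mat_adjoint P1 = P1" using o1 unfolding orth_projector_def by auto
lemma P2h[simp]: "mat_adjoint P2 = P2" using o2 unfolding orth_projector_def by auto
lemma P2eq: "P2 = 1\<^sub>m 4 - P1" using add_eq_minus[OF P1c P2c sum] .
lemma P12[simp]: "P1 * P2 = 0\<^sub>m 4 4"
  unfolding P2eq by (simp add: mdist_minus_r)
lemma P21[simp]: "P2 * P1 = 0\<^sub>m 4 4"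
  unfolding P2eq by (simp add: mdist_minus_l)

lemma comm2: "A \<in> carrier_mat 4 4 \<Longrightarrow> P1 * A = A * P1 \<Longrightarrow> P2 * A = A * P2"
  unfolding P2eq by (simp add: mdist_minus_r mdist_minus_l carrier_matD)

lemma ketbra_idem: assumes u: "is_unit_vec 2 e" shows "ketbra e * ketbra e = ketbra e"
proof (rule eq_matI)
  have d: "dim_vec e = 2" and c: "(\<Sum>k<2. cnj (e$k) * e$k) = 1" using u unfolding is_unit_vec_def cinner_def by auto
  fix i j assume ij: "i < dim_row (ketbra e)" "j < dim_col (ketbra e)"
  hence "(ketbra e * ketbra e) $$ (i,j) = e$i * cnj(e$j) * (\<Sum>k<2. cnj (e$k) * e$k)" using d
    by (simp add: ketbra_def scalar_prod_def row_def col_def sum_distrib_left atLeast0LessThan mult_ac)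
  thus "(ketbra e * ketbra e) $$ (i,j) = ketbra e $$ (i,j)" using c ij d by (simp add: ketbra_def)
qed auto

lemma ketbra_density: "is_unit_vec 2 e \<Longrightarrow> density_op 2 (ketbra e)"
  unfolding density_op_def
proof
  assume u: "is_unit_vec 2 e"
  show "positive_op 2 (ketbra e)"
    by (rule herm_idem_pos[OF _ ketbra_adj ketbra_idem[OF u]]) (use u in \<open>simp add: unit_expand\<close>)
  show "mtrace (ketbra e) = 1" using u unfolding unit_expand mtrace_def ketbra_def
    by (simp add: sum2 mult.commute)
qed

lemma tester_of:
  assumes u: "is_unit_vec 2 e" and c: "P1 * Kop e = Kop e * P1"
  shows "tester 2 2 2 [P1 * Kop e, P2 * Kop e]"
  unfolding tester_def
proof (intro conjI)
  have c2: "P2 * Kop e = Kop e * P2" using comm2[OF Kop_carrier c] .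
  show "length [P1 * Kop e, P2 * Kop e] = 2" by simp
  have "positive_op 4 (P1 * Kop e)"
    using herm_idem_prod[OF P1c Kop_carrier P1h Kop_herm[OF u] P1i Kop_idem[OF u] c]
    by (intro herm_idem_pos) (auto intro: mult_carrier_mat[OF P1c Kop_carrier])
  moreover have "positive_op 4 (P2 * Kop e)"
    using herm_idem_prod[OF P2c Kop_carrier P2h Kop_herm[OF u] P2i Kop_idem[OF u] c2]
    by (intro herm_idem_pos) (auto intro: mult_carrier_mat[OF P2c Kop_carrier])
  ultimately show "\<forall>X\<in>set [P1 * Kop e, P2 * Kop e]. positive_op (2 * 2) X" by simp
  have "foldr (+) [P1 * Kop e, P2 * Kop e] (0\<^sub>m (2 * 2) (2 * 2)) = P1 * Kop e + P2 * Kop e"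
    using right_add_zero_mat[OF mult_carrier_mat[OF P2c Kop_carrier]] by simp
  also have "\<dots> = (P1 + P2) * Kop e" by (simp add: mdist_add_l)
  also have "\<dots> = Kop e" unfolding sum by simp
  also have "\<dots> = kron 2 2 (1\<^sub>m 2) (ketbra e)" unfolding Kop_def by simp
  finally show "\<exists>\<rho>. density_op 2 \<rho> \<and> foldr (+) [P1 * Kop e, P2 * Kop e] (0\<^sub>m (2 * 2) (2 * 2)) = kron 2 2 (1\<^sub>m 2) \<rho>"
    using ketbra_density[OF u] by blast
qed

end


lemma Kop_sum: "is_unit_vec 2 e \<Longrightarrow> Kop e + Kop (perp e) = 1\<^sub>m 4"
  using Kop_compl[of e] by (intro eq_matI) auto

lemma Kop_trace: "is_unit_vec 2 e \<Longrightarrow> Kop e $$ (0,0) + Kop e $$ (1,1) = 1"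
  unfolding Kop_def kron_def ketbra_def unit_expand by (simp add: mult.commute)

context setting begin

lemma nonext_of_comm:
  assumes u: "is_unit_vec 2 e" and c: "P1 * Kop e = Kop e * P1"
  shows "\<not> extremal_tester 2 2 2 [(1/2) \<cdot>\<^sub>m P1, (1/2) \<cdot>\<^sub>m P2]"
proof -
  define K where "K = Kop e"
  define K' where "K' = Kop (perp e)"
  have u': "is_unit_vec 2 (perp e)" using perp_unit[OF u] .
  have K'eq: "K' = 1\<^sub>m 4 - K" unfolding K'_def K_def using Kop_compl[OF u] .
  have KK: "K + K' = 1\<^sub>m 4" unfolding K'_def K_def using Kop_sum[OF u] .
  have Kc[simp]: "K \<in> carrier_mat 4 4" "K' \<in> carrier_mat 4 4" unfolding K_def K'_def by auto
  have Kd[simp]: "dim_row K = 4" "dim_col K = 4" "dim_row K' = 4" "dim_col K' = 4" unfolding K_def K'_def by auto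
  have c': "P1 * K' = K' * P1" unfolding K'eq
    using c unfolding K_def by (intro comm_minus[of _ 4]) auto
  define X where "X = [P1 * K, P2 * K]"
  define Y where "Y = [P1 * K', P2 * K']"
  have tX: "tester 2 2 2 X" unfolding X_def K_def using tester_of[OF u c] .
  have tY: "tester 2 2 2 Y" unfolding Y_def K'_def using tester_of[OF u'] c' unfolding K'_def by blast
  have XY: "X \<noteq> Y"
  proof
    assume "X = Y"
    hence e1: "P1 * K = P1 * K'" and e2: "P2 * K = P2 * K'" unfolding X_def Y_def by auto
    have "K = (P1 + P2) * K" unfolding sum by simp
    also have "\<dots> = P1 * K + P2 * K" by (simp add: mdist_add_l)
    also have "\<dots> = P1 * K' + P2 * K'" using e1 e2 by simp
    also have "\<dots> = (P1 + P2) * K'" by (simp add: mdist_add_l)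
    also have "\<dots> = K'" unfolding sum by simp
    finally have "K = K'" .
    hence "K * K = K * (1\<^sub>m 4 - K)" using K'eq by simp
    also have "\<dots> = K - K * K" by (simp add: mdist_minus_r)
    finally have "K * K = K - K * K" .
    moreover have "K * K = K" unfolding K_def using Kop_idem[OF u] .
    ultimately have "K = K - K" by simp
    hence "K $$ (0,0) + K $$ (1,1) = 0" by (metis Kc(1) minus_r_inv_mat index_zero_mat(1) less4 zero_less_numeral carrier_matD one_less_numeral_iff semiring_norm(76) add_0)
    thus False using Kop_trace[OF u] unfolding K_def by simp
  qed
  have half: "complex_of_real (1/2) = 1/2" "complex_of_real (1 - 1/2) = 1/2" by simp_all
  have comb: "(1/2) \<cdot>\<^sub>m (P * K) + (1/2) \<cdot>\<^sub>m (P * K') = (1/2) \<cdot>\<^sub>m P" if P: "P \<in> carrier_mat 4 4" for P :: "complex mat"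
  proof -
    have Pd: "dim_row P = 4" "dim_col P = 4" using P by auto
    have "(1/2) \<cdot>\<^sub>m (P * K) + (1/2) \<cdot>\<^sub>m (P * K') = (1/2) \<cdot>\<^sub>m (P * K + P * K')"
      using P by (intro add_smult_distrib_left_mat[symmetric, of _ 4 4]) auto
    also have "P * K + P * K' = P * (K + K')" using Pd by (simp add: mdist_add_r)
    also have "\<dots> = P" unfolding KK using Pd by simp
    finally show ?thesis .
  qed
  have "[(1/2) \<cdot>\<^sub>m P1, (1/2) \<cdot>\<^sub>m P2] = conv_comb (1/2) X Y"
    unfolding conv_comb_def X_def Y_def half using comb[OF P1c] comb[OF P2c] by simp
  moreover have "(0::real) < 1/2" "(1/2::real) < 1" by simp_all
  ultimately show ?thesis unfolding extremal_tester_def using tX tY XY by blast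
qed

end


lemma smult_mat_vec: "dim_vec v = dim_col A \<Longrightarrow> (k \<cdot>\<^sub>m A) *\<^sub>v v = k \<cdot>\<^sub>v (A *\<^sub>v (v :: complex vec))"
  by (rule eq_vecI) (auto simp: scalar_prod_def row_def sum_distrib_left mult_ac intro!: sum.cong)

lemma smult_zero_vec': "k \<cdot>\<^sub>v 0\<^sub>v n = (0\<^sub>v n :: complex vec)"
  by (rule eq_vecI) auto

lemma pos_smult: assumes "positive_op n A" "0 \<le> c"
  shows "positive_op n (complex_of_real c \<cdot>\<^sub>m A)"
  using assms unfolding positive_op_def
  by (auto simp: adj_smult smult_mat_vec cinner_smult_right)

lemma len2: "length xs = 2 \<Longrightarrow> xs = [xs!0, xs!1]"
  by (cases xs; cases "tl xs") auto

lemma kill: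
  fixes A Q R :: "complex mat"
  assumes A: "A \<in> carrier_mat 4 4" and Q: "Q \<in> carrier_mat 4 4" and R: "R \<in> carrier_mat 4 4"
    and QR: "Q * R = 0\<^sub>m 4 4" and k: "\<And>v. v \<in> carrier_vec 4 \<Longrightarrow> Q *\<^sub>v v = 0\<^sub>v 4 \<Longrightarrow> A *\<^sub>v v = 0\<^sub>v 4"
  shows "A * R = 0\<^sub>m 4 4"
proof -
  have Ad: "dim_row A = 4" "dim_col A = 4" using carrier_matD[OF A] by auto
  have Rd: "dim_row R = 4" "dim_col R = 4" using carrier_matD[OF R] by auto
  show ?thesis
  proof (rule eq_matI)
    fix i j assume ij: "i < dim_row (0\<^sub>m 4 4 :: complex mat)" "j < dim_col (0\<^sub>m 4 4 :: complex mat)"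
    have i: "i < 4" and j: "j < 4" using ij by auto
    have cj: "col R j \<in> carrier_vec 4" unfolding carrier_vec_def using Rd by simp
    have "Q *\<^sub>v col R j = col (Q * R) j" using col_mult2[OF Q R j] by simp
    also have "\<dots> = 0\<^sub>v 4" unfolding QR using j by simp
    finally have "A *\<^sub>v col R j = 0\<^sub>v 4" using k cj by blast
    hence "(A *\<^sub>v col R j) $ i = 0" using i by simp
    moreover have "(A *\<^sub>v col R j) $ i = (A * R) $$ (i,j)" using Ad Rd i j by simp
    ultimately show "(A * R) $$ (i,j) = 0\<^sub>m 4 4 $$ (i,j)" using i j by simp
  qed (use Ad Rd in auto)
qed

lemma support:
  fixes A B P :: "complex mat"
  assumes A: "positive_op 4 A" and B: "positive_op 4 B" and s: "0 < s" and s': "0 \<le> s'"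
    and eq: "(1/2) \<cdot>\<^sub>m P = complex_of_real s \<cdot>\<^sub>m A + complex_of_real s' \<cdot>\<^sub>m B"
    and v: "v \<in> carrier_vec 4" and Pv: "P *\<^sub>v v = 0\<^sub>v 4" and P: "P \<in> carrier_mat 4 4"
  shows "A *\<^sub>v v = 0\<^sub>v 4"
proof -
  have Ac: "A \<in> carrier_mat 4 4" and Bc: "B \<in> carrier_mat 4 4" using A B unfolding positive_op_def by auto
  have "((1/2) \<cdot>\<^sub>m P) *\<^sub>v v = (1/2) \<cdot>\<^sub>v (P *\<^sub>v v)" by (rule smult_mat_vec) (use P v in auto)
  also have "\<dots> = 0\<^sub>v 4" unfolding Pv by (rule smult_zero_vec')
  finally have z: "((1/2) \<cdot>\<^sub>m P) *\<^sub>v v = 0\<^sub>v 4" .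
  have "((1/2) \<cdot>\<^sub>m P) *\<^sub>v v = (complex_of_real s \<cdot>\<^sub>m A) *\<^sub>v v + (complex_of_real s' \<cdot>\<^sub>m B) *\<^sub>v v"
    unfolding eq by (rule add_mult_distrib_mat_vec[of _ 4 4]) (use Ac Bc v in auto)
  also have "\<dots> = complex_of_real s \<cdot>\<^sub>v (A *\<^sub>v v) + complex_of_real s' \<cdot>\<^sub>v (B *\<^sub>v v)"
    using Ac Bc v by (simp add: smult_mat_vec)
  finally have "complex_of_real s \<cdot>\<^sub>v (A *\<^sub>v v) + complex_of_real s' \<cdot>\<^sub>v (B *\<^sub>v v) = 0\<^sub>v 4"
    using z by simp
  hence "cinner v (complex_of_real s \<cdot>\<^sub>v (A *\<^sub>v v) + complex_of_real s' \<cdot>\<^sub>v (B *\<^sub>v v)) = 0"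
    by (simp add: cinner_def)
  hence "complex_of_real s * cinner v (A *\<^sub>v v) + complex_of_real s' * cinner v (B *\<^sub>v v) = 0"
    using Ac Bc v by (simp add: cinner_add_right[of _ 4] cinner_smult_right)
  hence "Re (complex_of_real s * cinner v (A *\<^sub>v v) + complex_of_real s' * cinner v (B *\<^sub>v v)) = 0"
    by simp
  hence "s * Re (cinner v (A *\<^sub>v v)) + s' * Re (cinner v (B *\<^sub>v v)) = 0"
    by simp
  moreover have "0 \<le> Re (cinner v (A *\<^sub>v v))" "0 \<le> Re (cinner v (B *\<^sub>v v))"
    using A B v unfolding positive_op_def by auto
  ultimately have "s * Re (cinner v (A *\<^sub>v v)) = 0" using s s'
    by (smt (verit) mult_nonneg_nonneg)
  hence "Re (cinner v (A *\<^sub>v v)) = 0" using s by simp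
  thus ?thesis using psd_kernel[OF Ac _ _ v] A unfolding positive_op_def by auto
qed

context setting begin

lemma T_tester: "tester 2 2 2 [(1/2) \<cdot>\<^sub>m P1, (1/2) \<cdot>\<^sub>m P2]"
  unfolding tester_def
proof (intro conjI)
  have h: "(1/2 :: complex) = complex_of_real (1/2)" by simp
  have p1: "positive_op 4 P1" by (rule herm_idem_pos) auto
  have p2: "positive_op 4 P2" by (rule herm_idem_pos) auto
  show "length [(1/2) \<cdot>\<^sub>m P1, (1/2) \<cdot>\<^sub>m P2] = 2" by simp
  show "\<forall>X\<in>set [(1/2) \<cdot>\<^sub>m P1, (1/2) \<cdot>\<^sub>m P2]. positive_op (2 * 2) X"
    using pos_smult[OF p1, of "1/2"] pos_smult[OF p2, of "1/2"] unfolding h by simp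
  have po: "positive_op 2 (1\<^sub>m 2 :: complex mat)" by (rule herm_idem_pos) auto
  have d: "density_op 2 ((1/2) \<cdot>\<^sub>m 1\<^sub>m 2)" unfolding density_op_def
    using pos_smult[OF po, of "1/2"] unfolding h by (simp add: mtrace_def sum2)
  have "foldr (+) [(1/2) \<cdot>\<^sub>m P1, (1/2) \<cdot>\<^sub>m P2] (0\<^sub>m (2 * 2) (2 * 2)) = (1/2) \<cdot>\<^sub>m P1 + (1/2) \<cdot>\<^sub>m P2"
    by simp
  also have "\<dots> = (1/2) \<cdot>\<^sub>m (P1 + P2)" by (rule add_smult_distrib_left_mat[symmetric, of _ 4 4]) auto
  also have "\<dots> = kron 2 2 (1\<^sub>m 2) ((1/2) \<cdot>\<^sub>m 1\<^sub>m 2)" unfolding sum kron_smult[OF one_carrier_mat] kron_one_one ..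
  finally show "\<exists>\<rho>. density_op 2 \<rho> \<and> foldr (+) [(1/2) \<cdot>\<^sub>m P1, (1/2) \<cdot>\<^sub>m P2] (0\<^sub>m (2 * 2) (2 * 2)) = kron 2 2 (1\<^sub>m 2) \<rho>"
    using d by blast
qed

lemma decomp:
  fixes X1 X2 :: "complex mat"
  assumes X1: "X1 \<in> carrier_mat 4 4" and X2: "X2 \<in> carrier_mat 4 4"
    and h1: "mat_adjoint X1 = X1" and h2: "mat_adjoint X2 = X2"
    and z1: "X1 * P2 = 0\<^sub>m 4 4" and z2: "X2 * P1 = 0\<^sub>m 4 4"
  shows "P1 * (X1 + X2) = (X1 + X2) * P1" "X1 = P1 * (X1 + X2)" "X2 = P2 * (X1 + X2)"
proof -
  have d1: "dim_row X1 = 4" "dim_col X1 = 4" and d2: "dim_row X2 = 4" "dim_col X2 = 4" using X1 X2 by auto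
  have a: "P1 * X2 = 0\<^sub>m 4 4"
  proof -
    have "mat_adjoint (X2 * P1) = P1 * X2" using adj_mult[OF X2 P1c] h2 by simp
    thus ?thesis using z2 by simp
  qed
  have b: "X1 * P1 = X1"
  proof -
    have "X1 = X1 * (P1 + P2)" unfolding sum using d1 by simp
    also have "\<dots> = X1 * P1 + X1 * P2" using d1 by (simp add: mdist_add_r)
    finally show ?thesis using z1 X1 by simp
  qed
  have c: "P1 * X1 = X1"
  proof -
    have "mat_adjoint (X1 * P1) = P1 * X1" using adj_mult[OF X1 P1c] h1 by simp
    thus ?thesis using b h1 by simp
  qed
  have e1: "P1 * (X1 + X2) = X1" using d1 d2 a c X1 by (simp add: mdist_add_r)
  have e2: "(X1 + X2) * P1 = X1" using d1 d2 b z2 X1 by (simp add: mdist_add_l)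
  show "P1 * (X1 + X2) = (X1 + X2) * P1" using e1 e2 by simp
  show "X1 = P1 * (X1 + X2)" using e1 by simp
  have "P2 * (X1 + X2) = (X1 + X2) - P1 * (X1 + X2)" unfolding P2eq using d1 d2 by (simp add: mdist_minus_l)
  also have "\<dots> = X2" unfolding e1 using d1 d2 by (intro eq_matI) auto
  finally show "X2 = P2 * (X1 + X2)" by simp
qed

end


lemma density_facts:
  assumes "density_op 2 \<rho>"
  shows "\<rho> \<in> carrier_mat 2 2" "mat_adjoint \<rho> = \<rho>" "\<rho> $$ (0,0) + \<rho> $$ (1,1) = 1" "positive_op 2 \<rho>"
  using assms unfolding density_op_def positive_op_def mtrace_def by (auto simp: sum2)

context setting begin

lemma ext_dir:
  assumes ne: "\<not> extremal_tester 2 2 2 [(1/2) \<cdot>\<^sub>m P1, (1/2) \<cdot>\<^sub>m P2]"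
  shows "\<exists>e. is_unit_vec 2 e \<and> P1 * Kop e = Kop e * P1"
proof -
  obtain X Y t where tX: "tester 2 2 2 X" and tY: "tester 2 2 2 Y" and XY: "X \<noteq> Y"
    and t0: "0 < t" and t1: "t < 1" and T: "[(1/2) \<cdot>\<^sub>m P1, (1/2) \<cdot>\<^sub>m P2] = conv_comb t X Y"
    using ne T_tester unfolding extremal_tester_def by blast
  obtain \<rho>x where lX: "length X = 2" and pX: "\<forall>A\<in>set X. positive_op 4 A" and dx: "density_op 2 \<rho>x"
    and sX: "foldr (+) X (0\<^sub>m 4 4) = kron 2 2 (1\<^sub>m 2) \<rho>x"
    using tX unfolding tester_def by auto
  obtain \<rho>y where lY: "length Y = 2" and pY: "\<forall>A\<in>set Y. positive_op 4 A" and dy: "density_op 2 \<rho>y"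
    and sY: "foldr (+) Y (0\<^sub>m 4 4) = kron 2 2 (1\<^sub>m 2) \<rho>y"
    using tY unfolding tester_def by auto
  define X1 where "X1 = X!0"
  define X2 where "X2 = X!1"
  define Y1 where "Y1 = Y!0"
  define Y2 where "Y2 = Y!1"
  have Xeq: "X = [X1, X2]" unfolding X1_def X2_def using len2[OF lX] .
  have Yeq: "Y = [Y1, Y2]" unfolding Y1_def Y2_def using len2[OF lY] .
  have pX1: "positive_op 4 X1" and pX2: "positive_op 4 X2" using pX unfolding Xeq by auto
  have pY1: "positive_op 4 Y1" and pY2: "positive_op 4 Y2" using pY unfolding Yeq by auto
  have X1c: "X1 \<in> carrier_mat 4 4" and X2c: "X2 \<in> carrier_mat 4 4"
    and Y1c: "Y1 \<in> carrier_mat 4 4" and Y2c: "Y2 \<in> carrier_mat 4 4"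
    using pX1 pX2 pY1 pY2 unfolding positive_op_def by auto
  have hX1: "mat_adjoint X1 = X1" and hX2: "mat_adjoint X2 = X2"
    and hY1: "mat_adjoint Y1 = Y1" and hY2: "mat_adjoint Y2 = Y2"
    using pX1 pX2 pY1 pY2 unfolding positive_op_def by auto
  define a where "a = complex_of_real t"
  define b where "b = complex_of_real (1 - t)"
  have eq1: "(1/2) \<cdot>\<^sub>m P1 = a \<cdot>\<^sub>m X1 + b \<cdot>\<^sub>m Y1" and eq2: "(1/2) \<cdot>\<^sub>m P2 = a \<cdot>\<^sub>m X2 + b \<cdot>\<^sub>m Y2"
    using T unfolding Xeq Yeq conv_comb_def a_def b_def by auto
  have eq1': "(1/2) \<cdot>\<^sub>m P1 = b \<cdot>\<^sub>m Y1 + a \<cdot>\<^sub>m X1" unfolding eq1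
    by (rule comm_add_mat) (use X1c Y1c in auto)
  have eq2': "(1/2) \<cdot>\<^sub>m P2 = b \<cdot>\<^sub>m Y2 + a \<cdot>\<^sub>m X2" unfolding eq2
    by (rule comm_add_mat) (use X2c Y2c in auto)
  have tt: "0 < 1 - t" "0 \<le> t" "0 \<le> 1 - t" using t0 t1 by auto
  have zX1: "X1 * P2 = 0\<^sub>m 4 4"
    by (rule kill[OF X1c P1c P2c P12]) (rule support[OF pX1 pY1 t0 tt(3) eq1[unfolded a_def b_def]], auto)
  have zY1: "Y1 * P2 = 0\<^sub>m 4 4"
    by (rule kill[OF Y1c P1c P2c P12]) (rule support[OF pY1 pX1 tt(1) tt(2) eq1'[unfolded a_def b_def]], auto)
  have zX2: "X2 * P1 = 0\<^sub>m 4 4"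
    by (rule kill[OF X2c P2c P1c P21]) (rule support[OF pX2 pY2 t0 tt(3) eq2[unfolded a_def b_def]], auto)
  have zY2: "Y2 * P1 = 0\<^sub>m 4 4"
    by (rule kill[OF Y2c P2c P1c P21]) (rule support[OF pY2 pX2 tt(1) tt(2) eq2'[unfolded a_def b_def]], auto)
  note dX = decomp[OF X1c X2c hX1 hX2 zX1 zX2]
  note dY = decomp[OF Y1c Y2c hY1 hY2 zY1 zY2]
  have Mx: "X1 + X2 = kron 2 2 (1\<^sub>m 2) \<rho>x" using sX X2c unfolding Xeq by simp
  have My: "Y1 + Y2 = kron 2 2 (1\<^sub>m 2) \<rho>y" using sY Y2c unfolding Yeq by simp
  note fx = density_facts[OF dx] and fy = density_facts[OF dy]
  have rne: "\<rho>x \<noteq> \<rho>y"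
  proof
    assume "\<rho>x = \<rho>y"
    hence "X1 + X2 = Y1 + Y2" using Mx My by simp
    hence "X1 = Y1" "X2 = Y2" using dX dY by metis+
    thus False using XY Xeq Yeq by simp
  qed
  define \<sigma> where "\<sigma> = \<rho>x - \<rho>y"
  have Sc: "\<sigma> \<in> carrier_mat 2 2" unfolding \<sigma>_def using fx fy by auto
  have Sh: "mat_adjoint \<sigma> = \<sigma>" unfolding \<sigma>_def using adj_minus[OF fx(1) fy(1)] fx fy by simp
  have rxd: "dim_row \<rho>x = 2" "dim_col \<rho>x = 2" using carrier_matD[OF fx(1)] by auto
  have ryd: "dim_row \<rho>y = 2" "dim_col \<rho>y = 2" using carrier_matD[OF fy(1)] by auto
  have Str: "\<sigma> $$ (0,0) + \<sigma> $$ (1,1) = 0" unfolding \<sigma>_def using rxd ryd fx(3) fy(3)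
    by (simp add: algebra_simps)
  have Snz: "\<sigma> \<noteq> 0\<^sub>m 2 2"
  proof
    assume "\<sigma> = 0\<^sub>m 2 2"
    hence z: "\<And>i j. i < 2 \<Longrightarrow> j < 2 \<Longrightarrow> (\<rho>x - \<rho>y) $$ (i,j) = 0" unfolding \<sigma>_def by simp
    have "\<rho>x = \<rho>y"
    proof (rule eq_matI)
      fix i j assume "i < dim_row \<rho>y" "j < dim_col \<rho>y"
      thus "\<rho>x $$ (i,j) = \<rho>y $$ (i,j)" using z[of i j] rxd ryd by simp
    qed (use rxd ryd in auto)
    thus False using rne by simp
  qed
  obtain e c1 c2 where u: "is_unit_vec 2 e" and ke: "ketbra e = c1 \<cdot>\<^sub>m \<sigma> + c2 \<cdot>\<^sub>m 1\<^sub>m 2"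
    using traceless_to_ketbra[OF Sc Sh Str Snz] by blast
  have Kx: "kron 2 2 (1\<^sub>m 2) \<rho>x \<in> carrier_mat 4 4" and Ky: "kron 2 2 (1\<^sub>m 2) \<rho>y \<in> carrier_mat 4 4"
    using kron_carrier[of 2 2] by auto
  have "Kop e = kron 2 2 (1\<^sub>m 2) (c1 \<cdot>\<^sub>m \<sigma>) + kron 2 2 (1\<^sub>m 2) (c2 \<cdot>\<^sub>m 1\<^sub>m 2)"
    unfolding Kop_def ke using Sc by (intro kron_add) auto
  also have "\<dots> = c1 \<cdot>\<^sub>m (kron 2 2 (1\<^sub>m 2) \<rho>x - kron 2 2 (1\<^sub>m 2) \<rho>y) + c2 \<cdot>\<^sub>m 1\<^sub>m 4"
    using kron_smult[OF Sc, of c1] kron_smult[OF one_carrier_mat, of c2] kron_one_one kron_minus[OF fx(1) fy(1)]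
    unfolding \<sigma>_def by simp
  finally have Ke: "Kop e = c1 \<cdot>\<^sub>m (kron 2 2 (1\<^sub>m 2) \<rho>x - kron 2 2 (1\<^sub>m 2) \<rho>y) + c2 \<cdot>\<^sub>m 1\<^sub>m 4" .
  have cx: "P1 * kron 2 2 (1\<^sub>m 2) \<rho>x = kron 2 2 (1\<^sub>m 2) \<rho>x * P1" using dX(1) Mx by simp
  have cy: "P1 * kron 2 2 (1\<^sub>m 2) \<rho>y = kron 2 2 (1\<^sub>m 2) \<rho>y * P1" using dY(1) My by simp
  have "P1 * Kop e = Kop e * P1" unfolding Ke
    apply (rule comm_add[of _ 4])
    using Kx Ky cx cy
    by (auto intro!: comm_smult[of _ 4] comm_minus[of _ 4] comm_one)
  thus ?thesis using u by blast
qed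

end


lemma mat_unit_col: "(A :: complex mat) \<in> carrier_mat n m \<Longrightarrow> j < m \<Longrightarrow> i < n \<Longrightarrow> (A *\<^sub>v unit_vec m j) $ i = A $$ (i,j)"
  using scalar_prod_right_unit[of j m "row A i"] by simp

lemma massoc_v: "dim_col A = dim_row B \<Longrightarrow> dim_col B = dim_vec v \<Longrightarrow> (A * B) *\<^sub>v v = A *\<^sub>v (B *\<^sub>v (v :: complex vec))"
  by (rule assoc_mult_mat_vec[of A "dim_row A" "dim_col A" B "dim_col B"]) auto

lemma mat_eq_vec:
  fixes A B :: "complex mat"
  assumes A: "A \<in> carrier_mat n m" and B: "B \<in> carrier_mat n m"
    and k: "\<And>g. g \<in> carrier_vec m \<Longrightarrow> A *\<^sub>v g = B *\<^sub>v g"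
  shows "A = B"
proof (rule eq_matI)
  fix i j assume ij: "i < dim_row B" "j < dim_col B"
  hence i: "i < n" and j: "j < m" using B by auto
  have "A $$ (i,j) = (A *\<^sub>v unit_vec m j) $ i" using mat_unit_col[OF A j i] by simp
  also have "\<dots> = (B *\<^sub>v unit_vec m j) $ i" using k[of "unit_vec m j"] by simp
  also have "\<dots> = B $$ (i,j)" using mat_unit_col[OF B j i] .
  finally show "A $$ (i,j) = B $$ (i,j)" .
qed (use A B in auto)

lemma decomp_vec:
  assumes f: "is_unit_vec 2 f" and p: "is_unit_vec 2 fp" and o: "cinner f fp = 0" and g: "g \<in> carrier_vec 2"
  shows "g = cinner f g \<cdot>\<^sub>v f + cinner fp g \<cdot>\<^sub>v fp"
proof -
  have fd: "dim_vec f = 2" and pd: "dim_vec fp = 2" using f p unfolding unit_expand by auto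
  have "g = 1\<^sub>m 2 *\<^sub>v g" using g by simp
  also have "\<dots> = (ketbra f + ketbra fp) *\<^sub>v g" using compl_general[OF f p o] by simp
  also have "\<dots> = ketbra f *\<^sub>v g + ketbra fp *\<^sub>v g"
    by (rule add_mult_distrib_mat_vec[of _ 2 2]) (use fd pd g in auto)
  also have "\<dots> = cinner f g \<cdot>\<^sub>v f + cinner fp g \<cdot>\<^sub>v fp" using ketbra_vec[OF fd g] ketbra_vec[OF pd g] by simp
  finally show ?thesis .
qed

lemma Vm_dims2[simp]: "dim_row (mat_adjoint (Vm e)) = 2" "dim_col (mat_adjoint (Vm e)) = 4" by auto

context setting begin

lemma supp_fix: "x \<in> supp P1 \<Longrightarrow> P1 *\<^sub>v x = x"
  unfolding supp_def
proof -
  assume "x \<in> {P1 *\<^sub>v w |w. w \<in> carrier_vec (dim_col P1)}"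
  then obtain w where w: "w \<in> carrier_vec 4" and x: "x = P1 *\<^sub>v w" by auto
  have "P1 *\<^sub>v x = (P1 * P1) *\<^sub>v w" unfolding x using w massoc_v[of P1 P1 w] by (simp add: carrier_vecD)
  thus ?thesis using x by simp
qed

lemma supp_kill: "x \<in> supp P2 \<Longrightarrow> P1 *\<^sub>v x = 0\<^sub>v 4"
  unfolding supp_def
proof -
  assume "x \<in> {P2 *\<^sub>v w |w. w \<in> carrier_vec (dim_col P2)}"
  then obtain w where w: "w \<in> carrier_vec 4" and x: "x = P2 *\<^sub>v w" by auto
  have "P1 *\<^sub>v x = (P1 * P2) *\<^sub>v w" unfolding x using w massoc_v[of P1 P2 w] by (simp add: carrier_vecD)
  also have "\<dots> = 0\<^sub>v 4" unfolding P12 using w by (intro eq_vecI) (auto simp: carrier_vecD)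
  finally show ?thesis .
qed

lemma comm_of_b:
  assumes f: "is_unit_vec 2 f" and e: "is_unit_vec 2 e" and p: "is_unit_vec 2 fp" and o: "cinner f fp = 0"
    and s1: "kron_vec 2 2 f e \<in> supp P1" and s2: "kron_vec 2 2 fp e \<in> supp P2"
  shows "P1 * Kop e = Kop e * P1"
proof -
  define V where "V = Vm e"
  define F where "F = ketbra f"
  have fc: "f \<in> carrier_vec 2" and pc: "fp \<in> carrier_vec 2" using f p unfolding is_unit_vec_def by auto
  have fd: "dim_vec f = 2" using fc by auto
  have Vc: "V \<in> carrier_mat 4 2" unfolding V_def by simp
  have Fc: "F \<in> carrier_mat 2 2" unfolding F_def using fd by simp
  have x1: "P1 *\<^sub>v (V *\<^sub>v f) = V *\<^sub>v f" unfolding V_def Vvec[OF fc] using supp_fix[OF s1] .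
  have x2: "P1 *\<^sub>v (V *\<^sub>v fp) = 0\<^sub>v 4" unfolding V_def Vvec[OF pc] using supp_kill[OF s2] .
  have PV: "P1 * V = V * F"
  proof (rule mat_eq_vec[of _ 4 2])
    fix g :: "complex vec" assume g: "g \<in> carrier_vec 2"
    have "(P1 * V) *\<^sub>v g = P1 *\<^sub>v (V *\<^sub>v (cinner f g \<cdot>\<^sub>v f + cinner fp g \<cdot>\<^sub>v fp))"
      using decomp_vec[OF f p o g] Vc g by (simp add: massoc_v)
    also have "\<dots> = P1 *\<^sub>v (cinner f g \<cdot>\<^sub>v (V *\<^sub>v f) + cinner fp g \<cdot>\<^sub>v (V *\<^sub>v fp))"
      using Vc fc pc by (simp add: mult_add_distrib_mat_vec[of _ 4 2] mult_mat_vec[of _ 4 2])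
    also have "\<dots> = cinner f g \<cdot>\<^sub>v (P1 *\<^sub>v (V *\<^sub>v f)) + cinner fp g \<cdot>\<^sub>v (P1 *\<^sub>v (V *\<^sub>v fp))"
      using Vc fc pc by (simp add: mult_add_distrib_mat_vec[of _ 4 4] mult_mat_vec[of _ 4 4])
    also have "\<dots> = cinner f g \<cdot>\<^sub>v (V *\<^sub>v f)" unfolding x1 x2 using Vc fc by (intro eq_vecI) auto
    also have "\<dots> = V *\<^sub>v (F *\<^sub>v g)" unfolding F_def ketbra_vec[OF fd g] using Vc fc by (simp add: mult_mat_vec[of _ 4 2])
    also have "\<dots> = (V * F) *\<^sub>v g" using Vc Fc g by (simp add: massoc_v)
    finally show "(P1 * V) *\<^sub>v g = (V * F) *\<^sub>v g" .
  qed (use Vc Fc in auto)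
  have K: "Kop e = V * mat_adjoint V" unfolding V_def using Kop_V[OF e] .
  have "P1 * Kop e = V * F * mat_adjoint V" unfolding K using Vc PV by (simp add: massoc[symmetric])
  moreover have "mat_adjoint (V * F * mat_adjoint V) = V * F * mat_adjoint V"
    using adj_mult[OF mult_carrier_mat[OF Vc Fc], of "mat_adjoint V" 4] adj_mult[OF Vc Fc] Vc Fc
    unfolding F_def ketbra_adj by (simp add: massoc)
  moreover have "mat_adjoint (P1 * Kop e) = Kop e * P1" using adj_mult[OF P1c Kop_carrier] Kop_herm[OF e] by simp
  ultimately show ?thesis by simp
qed

end


lemma perp_orth': "is_unit_vec 2 e \<Longrightarrow> cinner (perp e) e = 0"
  unfolding unit_expand perp_def by (simp add: cinner2 mult.commute)

lemma supp_intro: "P *\<^sub>v x = x \<Longrightarrow> x \<in> carrier_vec (dim_col P) \<Longrightarrow> x \<in> supp P"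
  unfolding supp_def by (rule CollectI, rule exI[of _ x]) simp

lemma ketbra_dims[simp]: "dim_row (ketbra f) = dim_vec f" "dim_col (ketbra f) = dim_vec f"
  unfolding ketbra_def by auto

context setting begin

lemma block:
  assumes u: "is_unit_vec 2 u" and c: "P1 * Kop u = Kop u * P1"
  shows "P1 * Vm u = Vm u * (mat_adjoint (Vm u) * P1 * Vm u)"
    and "mat_adjoint (mat_adjoint (Vm u) * P1 * Vm u) = mat_adjoint (Vm u) * P1 * Vm u"
    and "(mat_adjoint (Vm u) * P1 * Vm u) * (mat_adjoint (Vm u) * P1 * Vm u) = mat_adjoint (Vm u) * P1 * Vm u"
    and "mat_adjoint (Vm u) * P1 * Vm u \<in> carrier_mat 2 2"
proof -
  define V where "V = Vm u"
  define Q where "Q = mat_adjoint V * P1 * V"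
  have Vc: "V \<in> carrier_mat 4 2" unfolding V_def by simp
  have Vd[simp]: "dim_row V = 4" "dim_col V = 2" "dim_row (mat_adjoint V) = 2" "dim_col (mat_adjoint V) = 4" unfolding V_def by auto
  have VV: "mat_adjoint V * V = 1\<^sub>m 2" unfolding V_def using VhV[OF u] .
  have K: "Kop u = V * mat_adjoint V" unfolding V_def using Kop_V[OF u] .
  have KV: "Kop u * V = V" unfolding K by (simp add: massoc VV)
  have PV: "P1 * V = V * Q"
  proof -
    have "P1 * V = P1 * (Kop u * V)" using KV by simp
    also have "\<dots> = Kop u * P1 * V" using c by (simp add: massoc[symmetric])
    also have "\<dots> = V * Q" unfolding K Q_def by (simp add: massoc)
    finally show ?thesis .
  qed
  thus "P1 * Vm u = Vm u * (mat_adjoint (Vm u) * P1 * Vm u)" unfolding V_def Q_def .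
  have aVc: "mat_adjoint V \<in> carrier_mat 2 4" using Vc by simp
  have PVc: "P1 * V \<in> carrier_mat 4 2" using mult_carrier_mat[OF P1c Vc] .
  have q1: "Q = mat_adjoint V * (P1 * V)" unfolding Q_def by (rule massoc) simp_all
  have a1: "mat_adjoint Q = mat_adjoint (P1 * V) * V" unfolding q1 using adj_mult[OF aVc PVc] by simp
  have a2: "mat_adjoint (P1 * V) = mat_adjoint V * P1" using adj_mult[OF P1c Vc] by simp
  have "mat_adjoint Q = mat_adjoint V * P1 * V" unfolding a1 a2 ..
  hence "mat_adjoint Q = Q" unfolding Q_def .
  thus "mat_adjoint (mat_adjoint (Vm u) * P1 * Vm u) = mat_adjoint (Vm u) * P1 * Vm u" unfolding V_def Q_def .
  have PP: "P1 * (P1 * V) = P1 * V" by (subst massoc[symmetric]) auto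
  have "Q * Q = mat_adjoint V * P1 * (V * Q)" unfolding Q_def by (simp add: massoc)
  also have "\<dots> = mat_adjoint V * (P1 * P1) * V" unfolding PV[symmetric] by (simp add: massoc PP)
  also have "\<dots> = Q" unfolding Q_def by simp
  finally show "(mat_adjoint (Vm u) * P1 * Vm u) * (mat_adjoint (Vm u) * P1 * Vm u) = mat_adjoint (Vm u) * P1 * Vm u"
    unfolding V_def Q_def .
  show "mat_adjoint (Vm u) * P1 * Vm u \<in> carrier_mat 2 2"
    using mult_carrier_mat[OF mult_carrier_mat[OF aVc P1c] Vc] unfolding V_def .
qed

lemma caseb:
  assumes u: "is_unit_vec 2 u" and f: "is_unit_vec 2 f" and PV: "P1 * Vm u = Vm u * ketbra f"
  shows "\<exists>f e fp. is_unit_vec 2 f \<and> is_unit_vec 2 e \<and> is_unit_vec 2 fp \<and> cinner f fp = 0 \<and>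
        kron_vec 2 2 f e \<in> supp P1 \<and> kron_vec 2 2 fp e \<in> supp P2"
proof -
  define V where "V = Vm u"
  define p where "p = perp f"
  have Vc: "V \<in> carrier_mat 4 2" unfolding V_def by simp
  have fc: "f \<in> carrier_vec 2" using f unfolding is_unit_vec_def by auto
  have fd: "dim_vec f = 2" using fc by auto
  have pc: "p \<in> carrier_vec 2" unfolding p_def by simp
  have pu: "is_unit_vec 2 p" unfolding p_def using perp_unit[OF f] .
  have o: "cinner f p = 0" unfolding p_def by (rule perp_orth)
  have ff: "cinner f f = 1" using f unfolding is_unit_vec_def by auto
  have act: "P1 *\<^sub>v (V *\<^sub>v g) = V *\<^sub>v (cinner f g \<cdot>\<^sub>v f)" if g: "g \<in> carrier_vec 2" for g
  proof -
    have "P1 *\<^sub>v (V *\<^sub>v g) = (P1 * V) *\<^sub>v g" using g Vc by (simp add: massoc_v carrier_vecD)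
    also have "\<dots> = (V * ketbra f) *\<^sub>v g" using PV unfolding V_def by simp
    also have "\<dots> = V *\<^sub>v (ketbra f *\<^sub>v g)" using g Vc fd by (simp add: massoc_v carrier_vecD)
    finally show ?thesis using ketbra_vec[OF fd g] by simp
  qed
  have x1: "P1 *\<^sub>v (V *\<^sub>v f) = V *\<^sub>v f" using act[OF fc] ff by simp
  have f0: "cinner f p \<cdot>\<^sub>v f = 0\<^sub>v 2" unfolding o using fc by (intro eq_vecI) (auto simp: carrier_vecD)
  have V0: "V *\<^sub>v 0\<^sub>v 2 = 0\<^sub>v 4" using Vc by (intro eq_vecI) (auto simp: scalar_prod_def carrier_matD)
  have x2: "P1 *\<^sub>v (V *\<^sub>v p) = 0\<^sub>v 4" using act[OF pc] unfolding f0 V0 .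
  have Vf: "V *\<^sub>v f \<in> carrier_vec 4" by (rule mult_mat_vec_carrier[OF Vc fc])
  have Vp: "V *\<^sub>v p \<in> carrier_vec 4" by (rule mult_mat_vec_carrier[OF Vc pc])
  have s1': "V *\<^sub>v f \<in> supp P1" by (rule supp_intro[OF x1]) (simp add: Vf)
  have s1: "kron_vec 2 2 f u \<in> supp P1" using s1' unfolding V_def Vvec[OF fc] .
  have "P2 *\<^sub>v (V *\<^sub>v p) = 1\<^sub>m 4 *\<^sub>v (V *\<^sub>v p) - P1 *\<^sub>v (V *\<^sub>v p)" unfolding P2eq
    by (rule minus_mult_distrib_mat_vec[OF one_carrier_mat P1c Vp])
  also have "\<dots> = V *\<^sub>v p" unfolding x2 using Vp by simp
  finally have x3: "P2 *\<^sub>v (V *\<^sub>v p) = V *\<^sub>v p" .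
  have s2': "V *\<^sub>v p \<in> supp P2" by (rule supp_intro[OF x3]) (simp add: Vp)
  have s2: "kron_vec 2 2 p u \<in> supp P2" using s2' unfolding V_def Vvec[OF pc] .
  show ?thesis
    apply (rule exI[of _ f], rule exI[of _ u], rule exI[of _ p])
    by (intro conjI f u pu o s1 s2)
qed

end


context setting begin

lemma b_of_comm:
  assumes e: "is_unit_vec 2 e" and c: "P1 * Kop e = Kop e * P1"
    and r1: "vec_space.rank 4 P1 = 2" and r2: "vec_space.rank 4 P2 = 2"
  shows "(\<exists>v. is_unit_vec 2 v \<and> P1 = kron 2 2 (1\<^sub>m 2) (ketbra v)) \<or>
     (\<exists>f e fp. is_unit_vec 2 f \<and> is_unit_vec 2 e \<and> is_unit_vec 2 fp \<and> cinner f fp = 0 \<and>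
        kron_vec 2 2 f e \<in> supp P1 \<and> kron_vec 2 2 fp e \<in> supp P2)"
proof -
  define ep where "ep = perp e"
  have ep: "is_unit_vec 2 ep" unfolding ep_def using perp_unit[OF e] .
  have Kep: "Kop ep = 1\<^sub>m 4 - Kop e" unfolding ep_def using Kop_compl[OF e] .
  have c': "P1 * Kop ep = Kop ep * P1" unfolding Kep
    by (rule comm_minus[of _ 4]) (use c in auto)
  define V where "V = Vm e"
  define W where "W = Vm ep"
  define Q where "Q = mat_adjoint V * P1 * V"
  define R where "R = mat_adjoint W * P1 * W"
  note bQ = block[OF e c, folded V_def, folded Q_def]
  note bR = block[OF ep c', folded W_def, folded R_def]
  have Vc: "V \<in> carrier_mat 4 2" and Wc: "W \<in> carrier_mat 4 2" unfolding V_def W_def by auto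
  have aVc: "mat_adjoint V \<in> carrier_mat 2 4" and aWc: "mat_adjoint W \<in> carrier_mat 2 4" using Vc Wc by auto
  have Qc: "Q \<in> carrier_mat 2 2" and Rc: "R \<in> carrier_mat 2 2" using bQ(4) bR(4) .
  have KeV: "Kop e = V * mat_adjoint V" unfolding V_def using Kop_V[OF e] .
  have KeW: "Kop ep = W * mat_adjoint W" unfolding W_def using Kop_V[OF ep] .
  have sumK: "Kop e + Kop ep = 1\<^sub>m 4" unfolding ep_def using Kop_sum[OF e] .
  have "P1 * (V * mat_adjoint V) = (P1 * V) * mat_adjoint V" by (rule massoc[symmetric]) (use Vc in auto)
  hence pe: "P1 * Kop e = V * Q * mat_adjoint V" unfolding KeV bQ(1) .
  have "P1 * (W * mat_adjoint W) = (P1 * W) * mat_adjoint W" by (rule massoc[symmetric]) (use Wc in auto)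
  hence pep: "P1 * Kop ep = W * R * mat_adjoint W" unfolding KeW bR(1) .
  have P1e: "P1 = V * Q * mat_adjoint V + W * R * mat_adjoint W"
  proof -
    have "P1 = P1 * (Kop e + Kop ep)" unfolding sumK by simp
    also have "\<dots> = P1 * Kop e + P1 * Kop ep" by (simp add: mdist_add_r)
    finally show ?thesis unfolding pe pep .
  qed
  have zV: "V * 0\<^sub>m 2 2 * mat_adjoint V = 0\<^sub>m 4 4" using Vc by simp
  have zW: "W * 0\<^sub>m 2 2 * mat_adjoint W = 0\<^sub>m 4 4" using Wc by simp
  have oV: "V * 1\<^sub>m 2 * mat_adjoint V = Kop e" unfolding KeV using Vc by simp
  have oW: "W * 1\<^sub>m 2 * mat_adjoint W = Kop ep" unfolding KeW using Wc by simp
  have rk0: "vec_space.rank 4 (0\<^sub>m 4 4 :: complex mat) = 0" by (rule vec_space.rank_0I)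
  from proj2_class[OF Qc bQ(2) bQ(3)] proj2_class[OF Rc bR(2) bR(3)]
  consider (qb) f where "is_unit_vec 2 f" "Q = ketbra f" | (rb) f where "is_unit_vec 2 f" "R = ketbra f"
    | (q0r0) "Q = 0\<^sub>m 2 2" "R = 0\<^sub>m 2 2" | (q0r1) "Q = 0\<^sub>m 2 2" "R = 1\<^sub>m 2"
    | (q1r0) "Q = 1\<^sub>m 2" "R = 0\<^sub>m 2 2" | (q1r1) "Q = 1\<^sub>m 2" "R = 1\<^sub>m 2"
    by blast
  thus ?thesis
  proof cases
    case (qb f)
    have "P1 * Vm e = Vm e * ketbra f" using bQ(1) qb(2) unfolding V_def by simp
    from caseb[OF e qb(1) this] show ?thesis by blast
  next
    case (rb f)
    have "P1 * Vm ep = Vm ep * ketbra f" using bR(1) rb(2) unfolding W_def by simp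
    from caseb[OF ep rb(1) this] show ?thesis by blast
  next
    case q0r0
    hence "P1 = 0\<^sub>m 4 4" using P1e zV zW by simp
    hence False using r1 rk0 by simp
    thus ?thesis ..
  next
    case q0r1
    hence "P1 = Kop ep" using P1e zV oW Kop_carrier[of ep] by simp
    thus ?thesis using ep unfolding Kop_def by blast
  next
    case q1r0
    hence "P1 = Kop e" using P1e zW oV Kop_carrier[of e] by simp
    thus ?thesis using e unfolding Kop_def by blast
  next
    case q1r1
    hence "P1 = 1\<^sub>m 4" using P1e oV oW sumK by simp
    hence "P2 = 0\<^sub>m 4 4" unfolding P2eq by (intro eq_matI) auto
    hence False using r2 rk0 by simp
    thus ?thesis ..
  qed
qed

end

theorem mainTheorem12:
  fixes P1 P2 :: "complex mat"
  assumes "orth_projector 4 P1" and "orth_projector 4 P2"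
    and "vec_space.rank 4 P1 = 2" and "vec_space.rank 4 P2 = 2"
    and "P1 + P2 = kron 2 2 (1\<^sub>m 2) (1\<^sub>m 2)"
  shows "\<not> extremal_tester 2 2 2 [(1/2) \<cdot>\<^sub>m P1, (1/2) \<cdot>\<^sub>m P2] \<longleftrightarrow>
    ((\<exists>v. is_unit_vec 2 v \<and> P1 = kron 2 2 (1\<^sub>m 2) (ketbra v)) \<or>
     (\<exists>f e fp. is_unit_vec 2 f \<and> is_unit_vec 2 e \<and> is_unit_vec 2 fp \<and> cinner f fp = 0 \<and>
        kron_vec 2 2 f e \<in> supp P1 \<and> kron_vec 2 2 fp e \<in> supp P2))"
proof -
  interpret setting P1 P2
    using assms(1,2,5) kron_one_one by unfold_locales auto
  show ?thesis
  proof
    assume "\<not> extremal_tester 2 2 2 [(1/2) \<cdot>\<^sub>m P1, (1/2) \<cdot>\<^sub>m P2]"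
    from ext_dir[OF this] obtain e where "is_unit_vec 2 e" "P1 * Kop e = Kop e * P1" by blast
    from b_of_comm[OF this assms(3,4)] show "(\<exists>v. is_unit_vec 2 v \<and> P1 = kron 2 2 (1\<^sub>m 2) (ketbra v)) \<or>
     (\<exists>f e fp. is_unit_vec 2 f \<and> is_unit_vec 2 e \<and> is_unit_vec 2 fp \<and> cinner f fp = 0 \<and>
        kron_vec 2 2 f e \<in> supp P1 \<and> kron_vec 2 2 fp e \<in> supp P2)" .
  next
    assume "(\<exists>v. is_unit_vec 2 v \<and> P1 = kron 2 2 (1\<^sub>m 2) (ketbra v)) \<or>
     (\<exists>f e fp. is_unit_vec 2 f \<and> is_unit_vec 2 e \<and> is_unit_vec 2 fp \<and> cinner f fp = 0 \<and>
        kron_vec 2 2 f e \<in> supp P1 \<and> kron_vec 2 2 fp e \<in> supp P2)"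
    thus "\<not> extremal_tester 2 2 2 [(1/2) \<cdot>\<^sub>m P1, (1/2) \<cdot>\<^sub>m P2]"
    proof
      assume "\<exists>v. is_unit_vec 2 v \<and> P1 = kron 2 2 (1\<^sub>m 2) (ketbra v)"
      then obtain v where v: "is_unit_vec 2 v" and pv: "P1 = Kop v" unfolding Kop_def by blast
      have "P1 * Kop v = Kop v * P1" unfolding pv ..
      from nonext_of_comm[OF v this] show ?thesis .
    next
      assume "\<exists>f e fp. is_unit_vec 2 f \<and> is_unit_vec 2 e \<and> is_unit_vec 2 fp \<and> cinner f fp = 0 \<and>
        kron_vec 2 2 f e \<in> supp P1 \<and> kron_vec 2 2 fp e \<in> supp P2"
      then obtain f e fp where "is_unit_vec 2 f" "is_unit_vec 2 e" "is_unit_vec 2 fp" "cinner f fp = 0"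
        "kron_vec 2 2 f e \<in> supp P1" "kron_vec 2 2 fp e \<in> supp P2" by blast
      from nonext_of_comm[OF \<open>is_unit_vec 2 e\<close> comm_of_b[OF this]] show ?thesis .
    qed
  qed
qed


end
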